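(* Let $\Pi(0)\subsetneq\Pi(1)\subsetneq\cdots\subsetneq\Pi(t-1)$ be fixed subspaces of $\mathbb{F}_q^n$ with $\dim\Pi(j)=d_j$. For $x\in\{u,v\}$ and $j=1,\dots,t$, let $\pi_x(j)$ be the span of $k_x(j)$ vectors chosen uniformly at random from $\Pi(j-1)$, all these draws (over $x$, $j$ and the individual vectors) being mutually independent, where the integers $k_x(j)$ satisfy $1\le k_x(1)<d_0$ and $k_x(j)\le d_{j-1}-d_{j-2}$ for $j=2,\dots,t$. Put $\Pi_x(i)=\sum_{j=1}^i\pi_x(j)$. Then with probability $1-O(q^{-1})$, \[ \Pi_u(i)\not\subseteq\Pi_v(j)\quad\text{and}\quad\Pi_v(j)\not\subseteq\Pi_u(i)\qquad\text{for all } i,j\in\{1,\dots,t\}. \]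
   Context: $O(\cdot)$ refers to $q\to\infty$ with $n,t$ and all dimensions and numbers $k_x(j)$ fixed. *)

theory Defs
  imports "HOL-Algebra.Ring" "HOL-Probability.Probability_Mass_Function"
begin

definition vecs :: "('a, 'b) ring_scheme \<Rightarrow> nat \<Rightarrow> 'a list set" where
  "vecs R n = {v. length v = n \<and> set v \<subseteq> carrier R}"

definition vzero :: "('a, 'b) ring_scheme \<Rightarrow> nat \<Rightarrow> 'a list" where
  "vzero R n = replicate n (ring.zero R)"

definition vadd :: "('a, 'b) ring_scheme \<Rightarrow> 'a list \<Rightarrow> 'a list \<Rightarrow> 'a list" where
  "vadd R u v = map2 (ring.add R) u v"

definition vsmult :: "('a, 'b) ring_scheme \<Rightarrow> 'a \<Rightarrow> 'a list \<Rightarrow> 'a list" where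
  "vsmult R c v = map (monoid.mult R c) v"

inductive_set span :: "('a, 'b) ring_scheme \<Rightarrow> nat \<Rightarrow> 'a list set \<Rightarrow> 'a list set"
  for R n S where
  span_zero: "vzero R n \<in> span R n S"
| span_base: "v \<in> S \<Longrightarrow> v \<in> span R n S"
| span_add: "a \<in> span R n S \<Longrightarrow> b \<in> span R n S \<Longrightarrow> vadd R a b \<in> span R n S"
| span_smult: "c \<in> carrier R \<Longrightarrow> a \<in> span R n S \<Longrightarrow> vsmult R c a \<in> span R n S"

definition subspace :: "('a, 'b) ring_scheme \<Rightarrow> nat \<Rightarrow> 'a list set \<Rightarrow> bool" where
  "subspace R n W \<longleftrightarrow> W \<subseteq> vecs R n \<and> vzero R n \<in> W
     \<and> (\<forall>a\<in>W. \<forall>b\<in>W. vadd R a b \<in> W)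
     \<and> (\<forall>c\<in>carrier R. \<forall>a\<in>W. vsmult R c a \<in> W)"

definition dim :: "('a, 'b) ring_scheme \<Rightarrow> nat \<Rightarrow> 'a list set \<Rightarrow> nat" where
  "dim R n W = (LEAST d. \<exists>B. finite B \<and> card B = d \<and> B \<subseteq> W \<and> span R n B = W)"

definition subspace_sum :: "('a, 'b) ring_scheme \<Rightarrow> nat \<Rightarrow> 'a list set set \<Rightarrow> 'a list set" where
  "subspace_sum R n Ws = span R n (\<Union>Ws)"

text \<open>Sample space of all draws: for x (True = u, False = v), j in 1..t, i < k x j,
  the vector omega x j i lies in P (j-1); unused coordinates are fixed to [].
  The uniform distribution on this set is the product of independent uniform draws.\<close>
definition draws :: "nat \<Rightarrow> (bool \<Rightarrow> nat \<Rightarrow> nat) \<Rightarrow> (nat \<Rightarrow> 'a list set)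
    \<Rightarrow> (bool \<Rightarrow> nat \<Rightarrow> nat \<Rightarrow> 'a list) set" where
  "draws t k P = {\<omega>. \<forall>x j i. if 1 \<le> j \<and> j \<le> t \<and> i < k x j
                      then \<omega> x j i \<in> P (j - 1) else \<omega> x j i = []}"

definition piv :: "('a, 'b) ring_scheme \<Rightarrow> nat \<Rightarrow> (bool \<Rightarrow> nat \<Rightarrow> nat)
    \<Rightarrow> (bool \<Rightarrow> nat \<Rightarrow> nat \<Rightarrow> 'a list) \<Rightarrow> bool \<Rightarrow> nat \<Rightarrow> 'a list set" where
  "piv R n k \<omega> x j = span R n {\<omega> x j i | i. i < k x j}"

definition PIv :: "('a, 'b) ring_scheme \<Rightarrow> nat \<Rightarrow> (bool \<Rightarrow> nat \<Rightarrow> nat)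
    \<Rightarrow> (bool \<Rightarrow> nat \<Rightarrow> nat \<Rightarrow> 'a list) \<Rightarrow> bool \<Rightarrow> nat \<Rightarrow> 'a list set" where
  "PIv R n k \<omega> x i = subspace_sum R n {piv R n k \<omega> x j | j. j \<in> {1..i}}"

end

theory Submission
  imports Defs
begin

context field
begin

lemma vecs_iff: "v \<in> vecs R n \<longleftrightarrow> length v = n \<and> (\<forall>l<n. v!l \<in> carrier R)"
  unfolding vecs_def by (auto simp: in_set_conv_nth subset_iff)

lemma vecsD: "v \<in> vecs R n \<Longrightarrow> l < n \<Longrightarrow> v!l \<in> carrier R"
  and vecs_len: "v \<in> vecs R n \<Longrightarrow> length v = n"
  by (auto simp: vecs_iff)

lemma vadd_len[simp]: "length (vadd R u v) = min (length u) (length v)"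
  by (simp add: vadd_def)
lemma vadd_nth[simp]: "l < length u \<Longrightarrow> l < length v \<Longrightarrow> vadd R u v ! l = u!l \<oplus> v!l"
  by (simp add: vadd_def)
lemma vsmult_len[simp]: "length (vsmult R c v) = length v"
  by (simp add: vsmult_def)
lemma vsmult_nth[simp]: "l < length v \<Longrightarrow> vsmult R c v ! l = c \<otimes> v!l"
  by (simp add: vsmult_def)
lemma vzero_len[simp]: "length (vzero R n) = n"
  by (simp add: vzero_def)
lemma vzero_nth[simp]: "l < n \<Longrightarrow> vzero R n ! l = \<zero>"
  by (simp add: vzero_def)

lemma vzero_vecs[simp]: "vzero R n \<in> vecs R n"
  by (simp add: vecs_iff)
lemma vadd_vecs[simp]: "u \<in> vecs R n \<Longrightarrow> v \<in> vecs R n \<Longrightarrow> vadd R u v \<in> vecs R n"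
  by (simp add: vecs_iff)
lemma vsmult_vecs[simp]: "c \<in> carrier R \<Longrightarrow> v \<in> vecs R n \<Longrightarrow> vsmult R c v \<in> vecs R n"
  by (simp add: vecs_iff)

lemma vec_eqI: "u \<in> vecs R n \<Longrightarrow> v \<in> vecs R n \<Longrightarrow> (\<And>l. l < n \<Longrightarrow> u!l = v!l) \<Longrightarrow> u = v"
  by (metis nth_equalityI vecs_len)

lemma finite_vecs: "finite (carrier R) \<Longrightarrow> finite (vecs R n)"
proof -
  assume "finite (carrier R)"
  then have "finite {xs. set xs \<subseteq> carrier R \<and> length xs = n}"
    by (rule finite_lists_length_eq)
  then show ?thesis unfolding vecs_def by (simp add: conj_commute)
qed

lemma span_vecs: "S \<subseteq> vecs R n \<Longrightarrow> span R n S \<subseteq> vecs R n"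
proof
  fix x assume S: "S \<subseteq> vecs R n" and x: "x \<in> span R n S"
  from x show "x \<in> vecs R n"
    by (induction rule: Defs.span.induct) (use S in auto)
qed

lemma span_minimal: "subspace R n W \<Longrightarrow> S \<subseteq> W \<Longrightarrow> span R n S \<subseteq> W"
proof
  fix x assume W: "subspace R n W" and S: "S \<subseteq> W" and x: "x \<in> span R n S"
  from x show "x \<in> W"
    by (induction rule: Defs.span.induct) (use W S in \<open>auto simp: subspace_def\<close>)
qed

lemma span_subspace: "S \<subseteq> vecs R n \<Longrightarrow> subspace R n (span R n S)"
  unfolding subspace_def using span_vecs
  by (auto intro: Defs.span.intros)

lemma span_sup: "S \<subseteq> span R n S"
  by (auto intro: Defs.span.intros)

lemma span_mono: "A \<subseteq> B \<Longrightarrow> span R n A \<subseteq> span R n B"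
proof
  fix x assume AB: "A \<subseteq> B" and x: "x \<in> span R n A"
  from x show "x \<in> span R n B"
    by (induction rule: Defs.span.induct) (use AB in \<open>auto intro: Defs.span.intros\<close>)
qed

lemma span_of_subspace: "subspace R n W \<Longrightarrow> span R n W = W"
  using span_minimal span_sup by blast

lemma span_span: "S \<subseteq> vecs R n \<Longrightarrow> span R n (span R n S) = span R n S"
  by (simp add: span_of_subspace span_subspace)

lemma span_Un_span: "A \<subseteq> vecs R n \<Longrightarrow> B \<subseteq> vecs R n \<Longrightarrow>
   span R n (span R n A \<union> B) = span R n (A \<union> B)"
proof
  assume A: "A \<subseteq> vecs R n" and B: "B \<subseteq> vecs R n"
  have "span R n A \<union> B \<subseteq> span R n (A \<union> B)"
    using span_mono[of A "A \<union> B"] span_sup[of "A \<union> B"] by blast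
  then show "span R n (span R n A \<union> B) \<subseteq> span R n (A \<union> B)"
    using span_minimal span_subspace A B by (metis Un_subset_iff)
  show "span R n (A \<union> B) \<subseteq> span R n (span R n A \<union> B)"
    using span_mono span_sup by (metis Un_mono subset_refl)
qed

lemma span_Union_spans: "\<Union>F \<subseteq> vecs R n \<Longrightarrow> span R n (\<Union>(span R n ` F)) = span R n (\<Union>F)"
proof
  assume F: "\<Union>F \<subseteq> vecs R n"
  have "\<Union>(span R n ` F) \<subseteq> span R n (\<Union>F)"
    using span_mono by (metis SUP_least Sup_upper)
  then show "span R n (\<Union>(span R n ` F)) \<subseteq> span R n (\<Union>F)"
    using span_minimal span_subspace F by metis
  have "\<Union>F \<subseteq> \<Union>(span R n ` F)" using span_sup by blast
  then show "span R n (\<Union>F) \<subseteq> span R n (\<Union>(span R n ` F))" by (rule span_mono)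
qed

end

context field
begin

definition lin1 where "lin1 U w = {vadd R u (vsmult R c w) | u c. u \<in> U \<and> c \<in> carrier R}"

lemma lin1_subspace:
  assumes U: "subspace R n U" and w: "w \<in> vecs R n"
  shows "subspace R n (lin1 U w)"
proof -
  have Uv: "U \<subseteq> vecs R n" using U by (simp add: subspace_def)
  have wl: "\<And>l. l < n \<Longrightarrow> w!l \<in> carrier R" using w vecsD by blast
  have lw: "length w = n" using w vecs_len by blast
  have "lin1 U w \<subseteq> vecs R n" unfolding lin1_def using Uv w by auto
  moreover have "vzero R n \<in> lin1 U w"
  proof -
    have "vzero R n = vadd R (vzero R n) (vsmult R \<zero> w)"
      by (rule vec_eqI[of _ n]) (auto simp: w lw wl)
    then show ?thesis unfolding lin1_def using U by (auto simp: subspace_def)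
  qed
  moreover have "\<forall>a\<in>lin1 U w. \<forall>b\<in>lin1 U w. vadd R a b \<in> lin1 U w"
  proof (intro ballI)
    fix a b assume "a \<in> lin1 U w" "b \<in> lin1 U w"
    then obtain u1 c1 u2 c2 where a: "a = vadd R u1 (vsmult R c1 w)" "u1 \<in> U" "c1 \<in> carrier R"
      and b: "b = vadd R u2 (vsmult R c2 w)" "u2 \<in> U" "c2 \<in> carrier R"
      unfolding lin1_def by blast
    have u1: "u1 \<in> vecs R n" and u2: "u2 \<in> vecs R n" using a b Uv by auto
    have "vadd R a b = vadd R (vadd R u1 u2) (vsmult R (c1 \<oplus> c2) w)"
    proof (rule vec_eqI[of _ n])
      fix l assume l: "l < n"
      have "u1!l \<in> carrier R" "u2!l \<in> carrier R" "w!l \<in> carrier R"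
        using u1 u2 w l vecsD by auto
      then have "u1 ! l \<oplus> c1 \<otimes> w ! l \<oplus> (u2 ! l \<oplus> c2 \<otimes> w ! l) = u1 ! l \<oplus> u2 ! l \<oplus> (c1 \<oplus> c2) \<otimes> w ! l"
        using a(3) b(3) by algebra
      then show "vadd R a b ! l = vadd R (vadd R u1 u2) (vsmult R (c1 \<oplus> c2) w) ! l"
        using l a b u1 u2 by (simp add: vecs_len lw)
    qed (use a b u1 u2 w in auto)
    moreover have "vadd R u1 u2 \<in> U" using U a b by (simp add: subspace_def)
    ultimately show "vadd R a b \<in> lin1 U w" unfolding lin1_def using a b by blast
  qed
  moreover have "\<forall>c\<in>carrier R. \<forall>a\<in>lin1 U w. vsmult R c a \<in> lin1 U w"
  proof (intro ballI)
    fix c a assume c: "c \<in> carrier R" and "a \<in> lin1 U w"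
    then obtain u1 c1 where a: "a = vadd R u1 (vsmult R c1 w)" "u1 \<in> U" "c1 \<in> carrier R"
      unfolding lin1_def by blast
    have u1: "u1 \<in> vecs R n" using a Uv by auto
    have "vsmult R c a = vadd R (vsmult R c u1) (vsmult R (c \<otimes> c1) w)"
    proof (rule vec_eqI[of _ n])
      fix l assume l: "l < n"
      have "u1!l \<in> carrier R" "w!l \<in> carrier R"
        using u1 w l vecsD by auto
      then have "c \<otimes> (u1 ! l \<oplus> c1 \<otimes> w ! l) = c \<otimes> u1 ! l \<oplus> (c \<otimes> c1) \<otimes> w ! l"
        using a(3) c by algebra
      then show "vsmult R c a ! l = vadd R (vsmult R c u1) (vsmult R (c \<otimes> c1) w) ! l"
        using l a u1 by (simp add: vecs_len lw)
    qed (use a c u1 w in auto)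
    moreover have "vsmult R c u1 \<in> U" using U a c by (simp add: subspace_def)
    ultimately show "vsmult R c a \<in> lin1 U w" unfolding lin1_def using a c by blast
  qed
  ultimately show ?thesis unfolding subspace_def by blast
qed

lemma span_insert_lin1:
  assumes U: "subspace R n U" and w: "w \<in> vecs R n"
  shows "span R n (U \<union> {w}) \<subseteq> lin1 U w"
proof (rule span_minimal[OF lin1_subspace[OF U w]])
  have Uv: "U \<subseteq> vecs R n" using U by (simp add: subspace_def)
  have lw: "length w = n" using w vecs_len by blast
  have wl: "\<And>l. l < n \<Longrightarrow> w!l \<in> carrier R" using w vecsD by blast
  have "U \<subseteq> lin1 U w"
  proof
    fix u assume u: "u \<in> U"
    then have uv: "u \<in> vecs R n" using Uv by auto
    have "u = vadd R u (vsmult R \<zero> w)"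
      by (rule vec_eqI[of _ n]) (use uv w wl vecsD in \<open>auto simp: vecs_len lw\<close>)
    then show "u \<in> lin1 U w" unfolding lin1_def using u by blast
  qed
  moreover have "w \<in> lin1 U w"
  proof -
    have "w = vadd R (vzero R n) (vsmult R \<one> w)"
      by (rule vec_eqI[of _ n]) (use w wl in \<open>auto simp: lw\<close>)
    then show ?thesis unfolding lin1_def using U by (auto simp: subspace_def)
  qed
  ultimately show "U \<union> {w} \<subseteq> lin1 U w" by blast
qed

end

context field
begin

lemma inv_cancel_l: "c \<in> carrier R \<Longrightarrow> c \<noteq> \<zero> \<Longrightarrow> x \<in> carrier R \<Longrightarrow> inv c \<otimes> (c \<otimes> x) = x"
  by (metis field_Units Units_inv_closed Units_l_inv m_assoc l_one DiffI singletonD)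

lemma key_L:
  assumes Q: "subspace R n Q" and U: "subspace R n U" and w: "w \<in> vecs R n"
    and nw: "w \<notin> span R n (Q \<union> U)"
  shows "span R n (U \<union> {w}) \<inter> Q \<subseteq> U"
proof
  fix x assume x: "x \<in> span R n (U \<union> {w}) \<inter> Q"
  have Uv: "U \<subseteq> vecs R n" and Qv: "Q \<subseteq> vecs R n" using U Q by (auto simp: subspace_def)
  obtain u c where xu: "x = vadd R u (vsmult R c w)" and u: "u \<in> U" and c: "c \<in> carrier R"
    using x span_insert_lin1[OF U w] unfolding lin1_def by blast
  have uv: "u \<in> vecs R n" using u Uv by auto
  have lw: "length w = n" "length u = n" using w uv vecs_len by auto
  show "x \<in> U"
  proof (cases "c = \<zero>")
    case True
    have "x = u"
      by (rule vec_eqI[of _ n]) (use xu uv w True vecsD in \<open>auto simp: lw\<close>)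
    then show ?thesis using u by simp
  next
    case False
    have xq: "x \<in> Q" using x by blast
    have xv: "x \<in> vecs R n" using xq Qv by auto
    have ic: "inv c \<in> carrier R" using c False field_Units by auto
    have "w = vsmult R (inv c) (vadd R x (vsmult R (\<ominus> \<one>) u))"
    proof (rule vec_eqI[of _ n])
      fix l assume l: "l < n"
      have wl: "w!l \<in> carrier R" and ul: "u!l \<in> carrier R" using w uv l vecsD by auto
      have "inv c \<otimes> ((u!l \<oplus> c \<otimes> w!l) \<oplus> (\<ominus> \<one>) \<otimes> u!l) = inv c \<otimes> (c \<otimes> w!l)"
        using wl ul c ic by algebra
      also have "\<dots> = w!l" using inv_cancel_l[OF c False wl] .
      finally show "w ! l = vsmult R (inv c) (vadd R x (vsmult R (\<ominus> \<one>) u)) ! l"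
        using l xu by (simp add: lw)
    qed (use w xv uv ic in auto)
    moreover have "vadd R x (vsmult R (\<ominus> \<one>) u) \<in> span R n (Q \<union> U)"
      using xq u ic by (intro Defs.span.span_add Defs.span.span_smult Defs.span.span_base) auto
    ultimately have "w \<in> span R n (Q \<union> U)"
      using ic by (metis Defs.span.span_smult)
    then show ?thesis using nw by blast
  qed
qed

lemma card_proper:
  assumes fin: "finite (carrier R)"
    and Y: "subspace R n Y" and S: "subspace R n S" and nY: "\<not> Y \<subseteq> S"
  shows "card (Y \<inter> S) * card (carrier R) \<le> card Y"
proof -
  obtain p where p: "p \<in> Y" "p \<notin> S" using nY by blast
  have Yv: "Y \<subseteq> vecs R n" and Sv: "S \<subseteq> vecs R n" using Y S by (auto simp: subspace_def)
  have pv: "p \<in> vecs R n" using p Yv by auto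
  have finY: "finite Y" using finite_vecs[OF fin] Yv finite_subset by blast
  define h where "h = (\<lambda>(c, s). vadd R s (vsmult R c p))"
  have himg: "h ` (carrier R \<times> (Y \<inter> S)) \<subseteq> Y"
    using Y p unfolding h_def subspace_def by auto
  have hinj: "inj_on h (carrier R \<times> (Y \<inter> S))"
  proof (rule inj_onI, clarify)
    fix c1 s1 c2 s2
    assume c1: "c1 \<in> carrier R" and s1: "s1 \<in> Y" "s1 \<in> S" and c2: "c2 \<in> carrier R"
      and s2: "s2 \<in> Y" "s2 \<in> S" and eq: "h (c1, s1) = h (c2, s2)"
    have s1v: "s1 \<in> vecs R n" and s2v: "s2 \<in> vecs R n" using s1 s2 Sv by auto
    have len: "length s1 = n" "length s2 = n" "length p = n" using s1v s2v pv vecs_len by auto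
    have eql: "s1!l \<oplus> c1 \<otimes> p!l = s2!l \<oplus> c2 \<otimes> p!l" if l: "l < n" for l
    proof -
      have "vadd R s1 (vsmult R c1 p) ! l = vadd R s2 (vsmult R c2 p) ! l"
        using eq by (simp add: h_def)
      then show ?thesis using l by (simp add: len)
    qed
    have cc: "c1 = c2"
    proof (rule ccontr)
      assume ne: "c1 \<noteq> c2"
      define e where "e = c1 \<ominus> c2"
      have e: "e \<in> carrier R" using c1 c2 e_def by simp
      have e0: "e \<noteq> \<zero>"
      proof
        assume "e = \<zero>"
        have "c1 = (c1 \<ominus> c2) \<oplus> c2" using c1 c2 by algebra
        then have "c1 = c2" using \<open>e = \<zero>\<close> c2 unfolding e_def by simp
        then show False using ne by simp
      qed
      have ie: "inv e \<in> carrier R" using e e0 field_Units by auto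
      have "p = vsmult R (inv e) (vadd R s2 (vsmult R (\<ominus> \<one>) s1))"
      proof (rule vec_eqI[of _ n])
        fix l assume l: "l < n"
        have pl: "p!l \<in> carrier R" and s1l: "s1!l \<in> carrier R" and s2l: "s2!l \<in> carrier R"
          using pv s1v s2v l vecsD by auto
        have "e \<otimes> p!l = (s1!l \<oplus> c1 \<otimes> p!l) \<ominus> s1!l \<ominus> c2 \<otimes> p!l"
          unfolding e_def using pl s1l c1 c2 by algebra
        also have "\<dots> = (s2!l \<oplus> c2 \<otimes> p!l) \<ominus> s1!l \<ominus> c2 \<otimes> p!l" using eql[OF l] by simp
        also have "\<dots> = s2!l \<oplus> (\<ominus> \<one>) \<otimes> s1!l"
          using pl s1l s2l c1 c2 by algebra
        finally have "e \<otimes> p!l = s2!l \<oplus> (\<ominus> \<one>) \<otimes> s1!l" .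
        then have "p!l = inv e \<otimes> (s2!l \<oplus> (\<ominus> \<one>) \<otimes> s1!l)"
          using inv_cancel_l[OF e e0 pl] by simp
        then show "p ! l = vsmult R (inv e) (vadd R s2 (vsmult R (\<ominus> \<one>) s1)) ! l"
          using l by (simp add: len)
      qed (use pv s1v s2v ie in auto)
      moreover have "vsmult R (inv e) (vadd R s2 (vsmult R (\<ominus> \<one>) s1)) \<in> S"
        using S s1 s2 ie unfolding subspace_def by auto
      ultimately show False using p by simp
    qed
    moreover have "s1 = s2"
    proof (rule vec_eqI[of _ n])
      fix l assume l: "l < n"
      have pl: "p!l \<in> carrier R" and s1l: "s1!l \<in> carrier R" and s2l: "s2!l \<in> carrier R"
        using pv s1v s2v l vecsD by auto
      have "s1!l = (s1!l \<oplus> c1 \<otimes> p!l) \<ominus> c1 \<otimes> p!l" using pl s1l c1 by algebra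
      also have "\<dots> = (s2!l \<oplus> c2 \<otimes> p!l) \<ominus> c2 \<otimes> p!l" using eql[OF l] cc by simp
      also have "\<dots> = s2!l" using pl s2l c2 by algebra
      finally show "s1!l = s2!l" .
    qed (use s1v s2v in auto)
    ultimately show "c1 = c2 \<and> s1 = s2" by simp
  qed
  have "card (carrier R \<times> (Y \<inter> S)) \<le> card Y"
    using card_inj_on_le[OF hinj himg finY] .
  then show ?thesis by (simp add: card_cartesian_product mult.commute)
qed

lemma dim_basis:
  assumes fin: "finite (carrier R)" and W: "subspace R n W"
  shows "\<exists>B. finite B \<and> card B = dim R n W \<and> B \<subseteq> W \<and> span R n B = W"
proof -
  have "finite W" using W finite_vecs[OF fin] finite_subset unfolding subspace_def by blast
  then have "\<exists>B. finite B \<and> card B = card W \<and> B \<subseteq> W \<and> span R n B = W"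
    using span_of_subspace[OF W] by blast
  then have "\<exists>d. \<exists>B. finite B \<and> card B = d \<and> B \<subseteq> W \<and> span R n B = W" by blast
  from LeastI_ex[OF this] show ?thesis unfolding dim_def .
qed

lemma dim_le:
  assumes "finite B" "span R n B = W"
  shows "dim R n W \<le> card B"
  unfolding dim_def using assms span_sup by (intro Least_le) blast

end

definition upd :: "(bool \<Rightarrow> nat \<Rightarrow> nat \<Rightarrow> 'a list) \<Rightarrow> bool \<Rightarrow> nat \<Rightarrow> nat \<Rightarrow> 'a list
   \<Rightarrow> (bool \<Rightarrow> nat \<Rightarrow> nat \<Rightarrow> 'a list)" where
  "upd \<omega> x0 j0 i0 y = (\<lambda>x j i. if x = x0 \<and> j = j0 \<and> i = i0 then y else \<omega> x j i)"

lemma drawsD: "\<omega> \<in> draws t k P \<Longrightarrow> 1 \<le> j \<Longrightarrow> j \<le> t \<Longrightarrow> i < k x j \<Longrightarrow> \<omega> x j i \<in> P (j - 1)"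
  unfolding draws_def by (metis (mono_tags, lifting) mem_Collect_eq)

lemma drawsD2: "\<omega> \<in> draws t k P \<Longrightarrow> \<not> (1 \<le> j \<and> j \<le> t \<and> i < k x j) \<Longrightarrow> \<omega> x j i = []"
  unfolding draws_def by (metis (mono_tags, lifting) mem_Collect_eq)

lemma drawsI: "(\<And>x j i. 1 \<le> j \<Longrightarrow> j \<le> t \<Longrightarrow> i < k x j \<Longrightarrow> \<omega> x j i \<in> P (j - 1))
  \<Longrightarrow> (\<And>x j i. \<not> (1 \<le> j \<and> j \<le> t \<and> i < k x j) \<Longrightarrow> \<omega> x j i = []) \<Longrightarrow> \<omega> \<in> draws t k P"
  unfolding draws_def by auto

lemma finite_draws:
  fixes P :: "nat \<Rightarrow> 'a list set"
  assumes fin: "\<And>j. 1 \<le> j \<Longrightarrow> j \<le> t \<Longrightarrow> finite (P (j - 1))"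
  shows "finite (draws t k P)"
proof -
  define I where "I = Sigma (UNIV::bool set) (\<lambda>x. Sigma {1..t} (\<lambda>j. {..<k x j}))"
  have finI: "finite I" unfolding I_def by (intro finite_SigmaI) auto
  define f where "f = (\<lambda>\<omega>::bool \<Rightarrow> nat \<Rightarrow> nat \<Rightarrow> 'a list. restrict (\<lambda>(x, j, i). \<omega> x j i) I)"
  have "f ` draws t k P \<subseteq> PiE I (\<lambda>(x, j, i). P (j - 1))"
  proof
    fix g assume "g \<in> f ` draws t k P"
    then obtain \<omega> where g: "g = f \<omega>" and \<omega>: "\<omega> \<in> draws t k P" by blast
    have w: "\<forall>x j i. if 1 \<le> j \<and> j \<le> t \<and> i < k x j
                      then \<omega> x j i \<in> P (j - 1) else \<omega> x j i = []"
      using \<omega> unfolding draws_def by blast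
    show "g \<in> PiE I (\<lambda>(x, j, i). P (j - 1))"
      unfolding PiE_iff
    proof
      show "g \<in> extensional I" unfolding g f_def by simp
      show "\<forall>a\<in>I. g a \<in> (case a of (x, j, i) \<Rightarrow> P (j - 1))"
      proof
        fix a assume a: "a \<in> I"
        obtain x j i where aa: "a = (x, j, i)" by (cases a) auto
        have "1 \<le> j \<and> j \<le> t \<and> i < k x j" using a unfolding aa I_def by auto
        then have "\<omega> x j i \<in> P (j - 1)" using \<omega> drawsD by blast
        then show "g a \<in> (case a of (x, j, i) \<Rightarrow> P (j - 1))" using a unfolding aa g f_def by simp
      qed
    qed
  qed
  moreover have "finite (PiE I (\<lambda>(x, j, i). P (j - 1)))"
    using finI fin unfolding I_def by (intro finite_PiE) auto
  ultimately have "finite (f ` draws t k P)" by (rule finite_subset)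
  moreover have "inj_on f (draws t k P)"
  proof (rule inj_onI)
    fix \<omega>1 \<omega>2 assume d1: "\<omega>1 \<in> draws t k P" and d2: "\<omega>2 \<in> draws t k P" and eq: "f \<omega>1 = f \<omega>2"
    show "\<omega>1 = \<omega>2"
    proof (intro ext)
      fix x j i
      show "\<omega>1 x j i = \<omega>2 x j i"
      proof (cases "1 \<le> j \<and> j \<le> t \<and> i < k x j")
        case True
        then have "(x, j, i) \<in> I" unfolding I_def by auto
        then show ?thesis using fun_cong[OF eq, of "(x, j, i)"] unfolding f_def by simp
      next
        case False
        then show ?thesis using d1 d2 drawsD2 by metis
      qed
    qed
  qed
  ultimately show ?thesis using finite_image_iff by blast
qed

lemma draws_nonempty:
  assumes ne: "\<And>j. 1 \<le> j \<Longrightarrow> j \<le> t \<Longrightarrow> P (j - 1) \<noteq> {}"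
  shows "draws t k P \<noteq> {}"
proof -
  define \<omega> where "\<omega> = (\<lambda>x j i. if 1 \<le> j \<and> j \<le> t \<and> i < k x j then (SOME y. y \<in> P (j - 1)) else [])"
  have "\<omega> \<in> draws t k P"
  proof (rule drawsI)
    fix x j i assume a: "1 \<le> j" "j \<le> t" "i < k x j"
    then have "P (j - 1) \<noteq> {}" using ne by blast
    then have "(SOME y. y \<in> P (j - 1)) \<in> P (j - 1)" by (simp add: some_in_eq)
    then show "\<omega> x j i \<in> P (j - 1)" unfolding \<omega>_def using a by simp
  next
    fix x j i assume "\<not> (1 \<le> j \<and> j \<le> t \<and> i < k x j)"
    then show "\<omega> x j i = []" unfolding \<omega>_def by auto
  qed
  then show ?thesis by blast
qed

lemma fiber_count:
  fixes P :: "nat \<Rightarrow> 'a list set"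
  assumes fin: "finite (draws t k P)" and finY0: "finite (P (j0 - 1))"
    and c: "1 \<le> j0" "j0 \<le> t" "i0 < k x0 j0"
    and bound: "\<And>\<omega>. \<omega> \<in> draws t k P \<Longrightarrow>
        card {y \<in> P (j0 - 1). upd \<omega> x0 j0 i0 y \<in> E} * q \<le> card (P (j0 - 1))"
  shows "card (draws t k P \<inter> E) * q \<le> card (draws t k P)"
proof -
  define D where "D = draws t k P"
  define Y where "Y = P (j0 - 1)"
  define g where "g = (\<lambda>(z::bool \<Rightarrow> nat \<Rightarrow> nat \<Rightarrow> 'a list, y). upd z x0 j0 i0 y)"
  define D0 where "D0 = (\<lambda>\<omega>. upd \<omega> x0 j0 i0 []) ` D"
  have updD: "upd \<omega> x0 j0 i0 y \<in> D \<longleftrightarrow> y \<in> Y" if "\<omega> \<in> D" for \<omega> y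
  proof
    assume "upd \<omega> x0 j0 i0 y \<in> D"
    then have "\<forall>x j i. if 1 \<le> j \<and> j \<le> t \<and> i < k x j
                      then upd \<omega> x0 j0 i0 y x j i \<in> P (j - 1) else upd \<omega> x0 j0 i0 y x j i = []"
      unfolding D_def draws_def by blast
    then have "if 1 \<le> j0 \<and> j0 \<le> t \<and> i0 < k x0 j0
                      then upd \<omega> x0 j0 i0 y x0 j0 i0 \<in> P (j0 - 1) else upd \<omega> x0 j0 i0 y x0 j0 i0 = []"
      by blast
    then show "y \<in> Y" using c unfolding Y_def upd_def by simp
  next
    assume y: "y \<in> Y"
    have w: "\<forall>x j i. if 1 \<le> j \<and> j \<le> t \<and> i < k x j
                      then \<omega> x j i \<in> P (j - 1) else \<omega> x j i = []"
      using that unfolding D_def draws_def by blast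
    show "upd \<omega> x0 j0 i0 y \<in> D"
      unfolding D_def draws_def mem_Collect_eq
    proof (intro allI)
      fix x j i
      show "if 1 \<le> j \<and> j \<le> t \<and> i < k x j
                      then upd \<omega> x0 j0 i0 y x j i \<in> P (j - 1) else upd \<omega> x0 j0 i0 y x j i = []"
      proof (cases "x = x0 \<and> j = j0 \<and> i = i0")
        case True then show ?thesis using y c unfolding Y_def upd_def by auto
      next
        case False then show ?thesis using that drawsD[of \<omega> t k P j i x] drawsD2[of \<omega> t k P j i x] unfolding upd_def D_def by auto
      qed
    qed
  qed
  have updupd: "upd (upd \<omega> x0 j0 i0 y1) x0 j0 i0 y2 = upd \<omega> x0 j0 i0 y2" for \<omega> y1 y2
    unfolding upd_def by (intro ext) auto
  have ginj: "inj_on g (D0 \<times> Y)"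
  proof (rule inj_onI, clarify)
    fix z1 y1 z2 y2 assume z1: "z1 \<in> D0" and z2: "z2 \<in> D0" and eq: "g (z1, y1) = g (z2, y2)"
    have y: "y1 = y2" using fun_cong[OF fun_cong[OF fun_cong[OF eq, of x0], of j0], of i0]
      unfolding g_def upd_def by simp
    have "z1 x0 j0 i0 = []" "z2 x0 j0 i0 = []" using z1 z2 unfolding D0_def upd_def by auto
    then have "z1 = z2"
    proof (intro ext)
      fix x j i
      assume e: "z1 x0 j0 i0 = []" "z2 x0 j0 i0 = []"
      have "upd z1 x0 j0 i0 y1 x j i = upd z2 x0 j0 i0 y2 x j i" using eq unfolding g_def by simp
      then show "z1 x j i = z2 x j i" using e unfolding upd_def by (auto split: if_splits)
    qed
    then show "z1 = z2 \<and> y1 = y2" using y by simp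
  qed
  have gimg: "g ` (D0 \<times> Y) = D"
  proof
    show "g ` (D0 \<times> Y) \<subseteq> D" using updD unfolding g_def D0_def by (auto simp: updupd)
    show "D \<subseteq> g ` (D0 \<times> Y)"
    proof
      fix \<omega> assume w: "\<omega> \<in> D"
      have "\<omega> = upd \<omega> x0 j0 i0 (\<omega> x0 j0 i0)" unfolding upd_def by (intro ext) auto
      then have "\<omega> = g (upd \<omega> x0 j0 i0 [], \<omega> x0 j0 i0)" unfolding g_def by (simp add: updupd)
      moreover have "\<omega> x0 j0 i0 \<in> Y" using w c drawsD unfolding D_def Y_def by blast
      ultimately show "\<omega> \<in> g ` (D0 \<times> Y)" using w unfolding D0_def by blast
    qed
  qed
  have finD: "finite D" using fin D_def by simp
  have finY: "finite Y" using finY0 Y_def by simp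
  have finD0: "finite D0" using finD D0_def by simp
  define Sg where "Sg = Sigma D0 (\<lambda>z. {y \<in> Y. g (z, y) \<in> E})"
  have "D \<inter> E \<subseteq> g ` Sg" using gimg unfolding Sg_def by auto
  then have "card (D \<inter> E) \<le> card (g ` Sg)" using finD0 finY
    by (intro card_mono) (auto simp: Sg_def)
  also have "\<dots> \<le> card Sg" using finD0 finY by (intro card_image_le) (auto simp: Sg_def)
  also have "\<dots> = (\<Sum>z\<in>D0. card {y \<in> Y. g (z, y) \<in> E})"
    unfolding Sg_def using finD0 finY by (subst card_SigmaI) auto
  finally have "card (D \<inter> E) * q \<le> (\<Sum>z\<in>D0. card {y \<in> Y. g (z, y) \<in> E}) * q"
    by simp
  also have "\<dots> = (\<Sum>z\<in>D0. card {y \<in> Y. g (z, y) \<in> E} * q)" by (simp add: sum_distrib_right)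
  also have "\<dots> \<le> (\<Sum>z\<in>D0. card Y)"
  proof (rule sum_mono)
    fix z assume "z \<in> D0"
    then obtain \<omega> where w: "\<omega> \<in> D" and z: "z = upd \<omega> x0 j0 i0 []" unfolding D0_def by blast
    have "{y \<in> Y. g (z, y) \<in> E} = {y \<in> P (j0 - 1). upd \<omega> x0 j0 i0 y \<in> E}"
      unfolding g_def z Y_def by (simp add: updupd)
    then show "card {y \<in> Y. g (z, y) \<in> E} * q \<le> card Y"
      using bound[of \<omega>] w unfolding D_def Y_def by simp
  qed
  also have "\<dots> = card (D0 \<times> Y)" by (simp add: card_cartesian_product)
  also have "\<dots> = card D" using card_image[OF ginj] gimg by simp
  finally show ?thesis unfolding D_def .
qed

lemma chain_mono:
  assumes ch: "\<forall>j. Suc j < t \<longrightarrow> P j \<subset> P (Suc j)"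
  shows "a \<le> b \<Longrightarrow> b < t \<Longrightarrow> P a \<subseteq> P b"
proof (induction b)
  case 0 then show ?case by simp
next
  case (Suc b)
  show ?case
  proof (cases "a = Suc b")
    case True then show ?thesis by simp
  next
    case False
    then have "P a \<subseteq> P b" using Suc by simp
    moreover have "P b \<subset> P (Suc b)" using ch Suc by blast
    ultimately show ?thesis by blast
  qed
qed

context field
begin

lemma inner:
  fixes K :: nat
  assumes Q: "subspace R n Q" and A: "A \<subseteq> Q"
    and ws: "\<And>i. i < K \<Longrightarrow> ws i \<in> vecs R n"
    and nw: "\<And>i. i < K \<Longrightarrow> ws i \<notin> span R n (Q \<union> {ws i' | i'. i' < i})"
  shows "span R n (A \<union> {ws i | i. i < K}) \<inter> Q \<subseteq> span R n A"
  using ws nw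
proof (induction K)
  case 0 then show ?case by simp
next
  case (Suc K)
  have Qv: "Q \<subseteq> vecs R n" using Q by (simp add: subspace_def)
  have Av: "A \<subseteq> vecs R n" using A Qv by blast
  define W where "W = {ws i | i. i < K}"
  have Wv: "W \<subseteq> vecs R n" using Suc.prems(1) unfolding W_def by auto
  define U where "U = span R n (A \<union> W)"
  have U: "subspace R n U" unfolding U_def using Av Wv by (intro span_subspace) auto
  have w: "ws K \<in> vecs R n" using Suc.prems(1) by simp
  have "U \<subseteq> span R n (Q \<union> W)" unfolding U_def using A by (intro span_mono) auto
  then have "Q \<union> U \<subseteq> span R n (Q \<union> W)" using span_sup by blast
  then have "span R n (Q \<union> U) \<subseteq> span R n (Q \<union> W)"
    using span_minimal span_subspace Qv Wv by (metis Un_subset_iff)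
  moreover have "ws K \<notin> span R n (Q \<union> W)" using Suc.prems(2)[of K] unfolding W_def by simp
  ultimately have "ws K \<notin> span R n (Q \<union> U)" by blast
  from key_L[OF Q U w this] have k: "span R n (U \<union> {ws K}) \<inter> Q \<subseteq> U" .
  have "{ws i | i. i < Suc K} = W \<union> {ws K}" unfolding W_def by (auto simp: less_Suc_eq)
  then have "span R n (A \<union> {ws i | i. i < Suc K}) = span R n (span R n (A \<union> W) \<union> {ws K})"
    using span_Un_span[where A="A \<union> W" and B="{ws K}"] Av Wv w by (simp add: Un_assoc)
  then have "span R n (A \<union> {ws i | i. i < Suc K}) \<inter> Q \<subseteq> U \<inter> Q" using k U_def by auto
  also have "U \<inter> Q \<subseteq> span R n A" unfolding U_def W_def using Suc by simp
  finally show ?case .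
qed

lemma structural:
  assumes D: "\<omega> \<in> draws t k P"
    and sub: "\<forall>j<t. subspace R n (P j)"
    and ch: "\<forall>j. Suc j < t \<longrightarrow> P j \<subset> P (Suc j)"
    and noF: "\<forall>x j i. 2 \<le> j \<and> j \<le> t \<and> i < k x j \<longrightarrow>
                 \<omega> x j i \<notin> span R n (P (j - 2) \<union> {\<omega> x j i' | i'. i' < i})"
  shows "1 \<le> m \<Longrightarrow> m \<le> t \<Longrightarrow>
     span R n (\<Union>j\<in>{1..m}. {\<omega> x j i | i. i < k x j}) \<inter> P 0 \<subseteq> span R n {\<omega> x 1 i | i. i < k x 1}"
proof (induction m)
  case 0 then show ?case by simp
next
  case (Suc m)
  show ?case
  proof (cases "m = 0")
    case True then show ?thesis by simp
  next
    case False
    define Q where "Q = P (m - 1)"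
    define A where "A = (\<Union>j\<in>{1..m}. {\<omega> x j i | i. i < k x j})"
    have mt: "m - 1 < t" using Suc by simp
    have Q: "subspace R n Q" unfolding Q_def using sub mt by simp
    have AQ: "A \<subseteq> Q"
    proof
      fix v assume "v \<in> A"
      then obtain j i where j: "1 \<le> j" "j \<le> m" "i < k x j" and v: "v = \<omega> x j i"
        unfolding A_def by auto
      have "v \<in> P (j - 1)" using drawsD[OF D, of j i x] j Suc.prems v by simp
      moreover have "P (j - 1) \<subseteq> P (m - 1)" using chain_mono[OF ch, of "j - 1" "m - 1"] j mt by simp
      ultimately show "v \<in> Q" unfolding Q_def by blast
    qed
    have Pm: "P m \<subseteq> vecs R n" using sub Suc.prems by (simp add: subspace_def)
    have ws: "\<omega> x (Suc m) i \<in> vecs R n" if "i < k x (Suc m)" for i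
      using drawsD[OF D, of "Suc m" i x] that Suc.prems Pm by auto
    have nw: "\<omega> x (Suc m) i \<notin> span R n (Q \<union> {\<omega> x (Suc m) i' | i'. i' < i})" if "i < k x (Suc m)" for i
    proof -
      have "2 \<le> Suc m" using False by simp
      then have "\<omega> x (Suc m) i \<notin> span R n (P (Suc m - 2) \<union> {\<omega> x (Suc m) i' | i'. i' < i})"
        using noF that Suc.prems by blast
      moreover have "Suc m - 2 = m - 1" by simp
      ultimately show ?thesis unfolding Q_def by simp
    qed
    have inn: "span R n (A \<union> {\<omega> x (Suc m) i | i. i < k x (Suc m)}) \<inter> Q \<subseteq> span R n A"
      by (rule inner[OF Q AQ, of "k x (Suc m)" "\<omega> x (Suc m)"]) (use ws nw in auto)
    have un: "(\<Union>j\<in>{1..Suc m}. {\<omega> x j i | i. i < k x j}) = A \<union> {\<omega> x (Suc m) i | i. i < k x (Suc m)}"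
    proof -
      have "{1..Suc m} = insert (Suc m) {1..m}" by auto
      then show ?thesis unfolding A_def by auto
    qed
    have P0Q: "P 0 \<subseteq> Q" unfolding Q_def using chain_mono[OF ch, of 0 "m - 1"] mt by simp
    have "span R n (\<Union>j\<in>{1..Suc m}. {\<omega> x j i | i. i < k x j}) \<inter> P 0 \<subseteq> span R n A \<inter> P 0"
      unfolding un using inn P0Q by blast
    also have "\<dots> \<subseteq> span R n {\<omega> x 1 i | i. i < k x 1}"
      using Suc.IH False Suc.prems unfolding A_def by simp
    finally show ?thesis .
  qed
qed

lemma boundE:
  assumes fin: "finite (carrier R)" and D: "\<omega> \<in> draws t k P" and t: "1 \<le> t"
    and P0: "subspace R n (P 0)" and dP0: "dim R n (P 0) = d 0" and kx: "k x 1 < d 0"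
  shows "card {y \<in> P 0. y \<in> span R n {\<omega> x 1 i | i. i < k x 1}} * card (carrier R) \<le> card (P 0)"
proof -
  define L where "L = {\<omega> x 1 i | i. i < k x 1}"
  have LP: "L \<subseteq> P 0" unfolding L_def using drawsD[OF D] t by fastforce
  have Lv: "L \<subseteq> vecs R n" using LP P0 by (auto simp: subspace_def)
  have S: "subspace R n (span R n L)" using span_subspace[OF Lv] .
  have nY: "\<not> P 0 \<subseteq> span R n L"
  proof
    assume a: "P 0 \<subseteq> span R n L"
    have "span R n L \<subseteq> P 0" using span_minimal[OF P0 LP] .
    then have eq: "span R n L = P 0" using a by blast
    have L: "L = (\<lambda>i. \<omega> x 1 i) ` {..<k x 1}" unfolding L_def by auto
    have finL: "finite L" unfolding L by simp
    have "card L \<le> k x 1" unfolding L using card_image_le[of "{..<k x 1}"] by simp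
    moreover have "dim R n (P 0) \<le> card L" using dim_le[OF finL eq] .
    ultimately show False using dP0 kx by simp
  qed
  have "{y \<in> P 0. y \<in> span R n L} = P 0 \<inter> span R n L" by auto
  then show ?thesis using card_proper[OF fin P0 S nY] unfolding L_def by simp
qed

lemma boundF:
  assumes fin: "finite (carrier R)" and D: "\<omega> \<in> draws t k P"
    and j: "2 \<le> j" "j \<le> t" and i: "i < k x j" and kj: "k x j \<le> d (j - 1) - d (j - 2)"
    and sub: "\<forall>j<t. subspace R n (P j) \<and> dim R n (P j) = d j"
    and ch: "\<forall>j. Suc j < t \<longrightarrow> P j \<subset> P (Suc j)"
  shows "card {y \<in> P (j - 1). y \<in> span R n (P (j - 2) \<union> {\<omega> x j i' | i'. i' < i})} * card (carrier R)
          \<le> card (P (j - 1))"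
proof -
  define W where "W = {\<omega> x j i' | i'. i' < i}"
  define Y where "Y = P (j - 1)"
  define Q where "Q = P (j - 2)"
  have Y: "subspace R n Y" "dim R n Y = d (j - 1)" using sub j unfolding Y_def by auto
  have Q: "subspace R n Q" "dim R n Q = d (j - 2)" using sub j unfolding Q_def by auto
  have QY: "Q \<subseteq> Y" unfolding Q_def Y_def using chain_mono[OF ch, of "j - 2" "j - 1"] j by simp
  have WY: "W \<subseteq> Y" unfolding W_def Y_def using drawsD[OF D, of j _ x] j i by auto
  have Yv: "Y \<subseteq> vecs R n" using Y by (simp add: subspace_def)
  have Qv: "Q \<subseteq> vecs R n" using QY Yv by blast
  have Wv: "W \<subseteq> vecs R n" using WY Yv by blast
  have S: "subspace R n (span R n (Q \<union> W))" using Qv Wv by (intro span_subspace) auto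
  have nY: "\<not> Y \<subseteq> span R n (Q \<union> W)"
  proof
    assume a: "Y \<subseteq> span R n (Q \<union> W)"
    have "span R n (Q \<union> W) \<subseteq> Y" using span_minimal[OF Y(1)] QY WY by blast
    then have eq: "span R n (Q \<union> W) = Y" using a by blast
    obtain B where B: "finite B" "card B = d (j - 2)" "B \<subseteq> Q" "span R n B = Q"
      using dim_basis[OF fin Q(1)] Q(2) by auto
    have Bv: "B \<subseteq> vecs R n" using B Qv by blast
    have "span R n (B \<union> W) = span R n (span R n B \<union> W)" using span_Un_span[OF Bv Wv] by simp
    also have "\<dots> = Y" using B eq by simp
    finally have eqB: "span R n (B \<union> W) = Y" .
    have Wi: "W = (\<lambda>i'. \<omega> x j i') ` {..<i}" unfolding W_def by auto
    have finW: "finite W" unfolding Wi by simp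
    have cW: "card W \<le> i" unfolding Wi using card_image_le[of "{..<i}"] by simp
    have "card (B \<union> W) \<le> card B + card W" by (rule card_Un_le)
    also have "\<dots> < d (j - 1)" using B(2) cW i kj by linarith
    finally have "card (B \<union> W) < d (j - 1)" .
    moreover have "dim R n Y \<le> card (B \<union> W)" using dim_le[OF _ eqB] B(1) finW by simp
    ultimately show False using Y(2) by simp
  qed
  have "{y \<in> Y. y \<in> span R n (Q \<union> W)} = Y \<inter> span R n (Q \<union> W)" by auto
  then show ?thesis using card_proper[OF fin Y(1) S nY] unfolding W_def Y_def Q_def by simp
qed

lemma PIv_eq:
  assumes D: "\<omega> \<in> draws t k P" and sub: "\<forall>j<t. subspace R n (P j)" and m: "m \<le> t"
  shows "PIv R n k \<omega> x m = span R n (\<Union>j\<in>{1..m}. {\<omega> x j i | i. i < k x j})"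
proof -
  define F where "F = (\<lambda>j. {\<omega> x j i | i. i < k x j}) ` {1..m}"
  have "{piv R n k \<omega> x j | j. j \<in> {1..m}} = span R n ` F"
    unfolding F_def piv_def by auto
  moreover have "\<Union>F \<subseteq> vecs R n"
  proof
    fix v assume "v \<in> \<Union>F"
    then obtain j i where j: "1 \<le> j" "j \<le> m" "i < k x j" and v: "v = \<omega> x j i"
      unfolding F_def by auto
    have "v \<in> P (j - 1)" using drawsD[OF D, of j i x] j m v by simp
    moreover have "subspace R n (P (j - 1))" using sub j m by simp
    ultimately show "v \<in> vecs R n" by (auto simp: subspace_def)
  qed
  ultimately have "PIv R n k \<omega> x m = span R n (\<Union>F)"
    unfolding PIv_def subspace_sum_def using span_Union_spans by simp
  then show ?thesis unfolding F_def by simp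
qed

end

theorem lemma4:
  fixes n t :: nat and d :: "nat \<Rightarrow> nat" and k :: "bool \<Rightarrow> nat \<Rightarrow> nat"
  assumes k1: "\<forall>x. 1 \<le> k x 1 \<and> k x 1 < d 0"
      and kj: "\<forall>x j. 2 \<le> j \<and> j \<le> t \<longrightarrow> k x j \<le> d (j - 1) - d (j - 2)"
  shows "\<exists>C::real. \<forall>(R :: nat ring) (P :: nat \<Rightarrow> nat list set).
           field R \<longrightarrow> finite (carrier R) \<longrightarrow>
           (\<forall>j<t. subspace R n (P j) \<and> dim R n (P j) = d j) \<longrightarrow>
           (\<forall>j. Suc j < t \<longrightarrow> P j \<subset> P (Suc j)) \<longrightarrow>
           measure_pmf.prob (pmf_of_set (draws t k P))
             {\<omega>. \<forall>i\<in>{1..t}. \<forall>j\<in>{1..t}.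
                  \<not> PIv R n k \<omega> True i \<subseteq> PIv R n k \<omega> False j \<and>
                  \<not> PIv R n k \<omega> False j \<subseteq> PIv R n k \<omega> True i}
           \<ge> 1 - C / real (card (carrier R))"
proof -
  define I2 where "I2 = Sigma (UNIV::bool set) (\<lambda>x. Sigma {2..t} (\<lambda>j. {..<k x j}))"
  have finI2: "finite I2" unfolding I2_def by (intro finite_SigmaI) auto
  show ?thesis
  proof (intro exI[of _ "real (2 + card I2)"] allI impI)
    fix R :: "nat ring" and P :: "nat \<Rightarrow> nat list set"
    assume fR: "field R" and fin: "finite (carrier R)"
      and sub: "\<forall>j<t. subspace R n (P j) \<and> dim R n (P j) = d j"
      and ch: "\<forall>j. Suc j < t \<longrightarrow> P j \<subset> P (Suc j)"
    interpret field R by fact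
    define q where "q = card (carrier R)"
    have q0: "q > 0" unfolding q_def using fin carrier_not_empty card_gt_0_iff by blast
    define D where "D = draws t k P"
    define G where "G = {\<omega>. \<forall>i\<in>{1..t}. \<forall>j\<in>{1..t}.
                  \<not> PIv R n k \<omega> True i \<subseteq> PIv R n k \<omega> False j \<and>
                  \<not> PIv R n k \<omega> False j \<subseteq> PIv R n k \<omega> True i}"
    have subs: "\<forall>j<t. subspace R n (P j)" using sub by simp
    have finP: "finite (P (j - 1))" if "1 \<le> j" "j \<le> t" for j
    proof -
      have "P (j - 1) \<subseteq> vecs R n" using sub that by (simp add: subspace_def)
      then show ?thesis using finite_vecs[OF fin] finite_subset by blast
    qed
    have finD: "finite D" unfolding D_def using finP by (intro finite_draws) auto
    have neD: "D \<noteq> {}" unfolding D_def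
    proof (rule draws_nonempty)
      fix j :: nat assume "1 \<le> j" "j \<le> t"
      then have "vzero R n \<in> P (j - 1)" using sub by (simp add: subspace_def)
      then show "P (j - 1) \<noteq> {}" by blast
    qed
    have cD: "card D > 0" using finD neD card_gt_0_iff by blast
    have prob: "measure_pmf.prob (pmf_of_set D) G = card (D \<inter> G) / card D"
      using measure_pmf_of_set[OF neD finD] .
    have main: "measure_pmf.prob (pmf_of_set D) G \<ge> 1 - real (2 + card I2) / real q"
    proof (cases "t = 0")
      case True
      then have "G = UNIV" unfolding G_def by simp
      then have "measure_pmf.prob (pmf_of_set D) G = 1" using prob cD by simp
      then show ?thesis using q0 by simp
    next
      case False
      then have t1: "1 \<le> t" by simp
      define E1 where "E1 = {\<omega>::bool \<Rightarrow> nat \<Rightarrow> nat \<Rightarrow> nat list. \<omega> True 1 0 \<in> span R n {\<omega> False 1 i | i. i < k False 1}}"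
      define E2 where "E2 = {\<omega>::bool \<Rightarrow> nat \<Rightarrow> nat \<Rightarrow> nat list. \<omega> False 1 0 \<in> span R n {\<omega> True 1 i | i. i < k True 1}}"
      define F where "F = (\<lambda>(x, j, i). {\<omega>::bool \<Rightarrow> nat \<Rightarrow> nat \<Rightarrow> nat list. \<omega> x j i \<in> span R n (P (j - 2) \<union> {\<omega> x j i' | i'. i' < i})})"
      define Bad where "Bad = E1 \<union> E2 \<union> (\<Union>c\<in>I2. F c)"
      have P0: "subspace R n (P 0)" "dim R n (P 0) = d 0" using sub t1 by auto
      have finP0: "finite (P (1 - 1))" using finP[of 1] t1 by simp
      have finD': "finite (draws t k P)" using finD D_def by simp
      have "1 \<le> k True 1" "1 \<le> k False 1" using k1 by blast+
      then have kT: "0 < k True 1" and kF: "0 < k False 1" by auto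
      have bE1: "card {y \<in> P (1 - 1). upd \<omega> True 1 0 y \<in> E1} * q \<le> card (P (1 - 1))"
        if w: "\<omega> \<in> draws t k P" for \<omega>
      proof -
        have "{y \<in> P (1 - 1). upd \<omega> True 1 0 y \<in> E1} = {y \<in> P 0. y \<in> span R n {\<omega> False 1 i | i. i < k False 1}}"
          unfolding E1_def upd_def by simp
        then show ?thesis
          using boundE[where d=d and x=False, OF fin w t1 P0] k1 unfolding q_def by simp
      qed
      have cE1: "card (D \<inter> E1) * q \<le> card D"
        using fiber_count[OF finD' finP0 order_refl t1 kT bE1] D_def by simp
      have bE2: "card {y \<in> P (1 - 1). upd \<omega> False 1 0 y \<in> E2} * q \<le> card (P (1 - 1))"
        if w: "\<omega> \<in> draws t k P" for \<omega>
      proof -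
        have "{y \<in> P (1 - 1). upd \<omega> False 1 0 y \<in> E2} = {y \<in> P 0. y \<in> span R n {\<omega> True 1 i | i. i < k True 1}}"
          unfolding E2_def upd_def by simp
        then show ?thesis
          using boundE[where d=d and x=True, OF fin w t1 P0] k1 unfolding q_def by simp
      qed
      have cE2: "card (D \<inter> E2) * q \<le> card D"
        using fiber_count[OF finD' finP0 order_refl t1 kF bE2] D_def by simp
      have cF: "card (D \<inter> F c) * q \<le> card D" if c: "c \<in> I2" for c
      proof -
        obtain x j i where cc: "c = (x, j, i)" by (cases c) auto
        have j: "2 \<le> j" "j \<le> t" "i < k x j" using c unfolding cc I2_def by auto
        have finPj: "finite (P (j - 1))" using finP[of j] j by simp
        have j1: "1 \<le> j" using j by simp
        have bF: "card {y \<in> P (j - 1). upd \<omega> x j i y \<in> F c} * q \<le> card (P (j - 1))"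
          if w: "\<omega> \<in> draws t k P" for \<omega>
        proof -
          have ss: "{upd \<omega> x j i y x j i' | i'. i' < i} = {\<omega> x j i' | i'. i' < i}" for y
            unfolding upd_def by auto
          have "{y \<in> P (j - 1). upd \<omega> x j i y \<in> F c} = {y \<in> P (j - 1). y \<in> span R n (P (j - 2) \<union> {\<omega> x j i' | i'. i' < i})}"
            unfolding F_def cc using ss by (simp add: upd_def)
          then show ?thesis
            using boundF[OF fin w j(1) j(2) j(3) _ sub ch] kj j unfolding q_def by simp
        qed
        show ?thesis using fiber_count[OF finD' finPj j1 j(2) j(3) bF] D_def by simp
      qed
      have DB: "D \<inter> Bad = (D \<inter> E1) \<union> (D \<inter> E2) \<union> (\<Union>c\<in>I2. D \<inter> F c)" unfolding Bad_def by blast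
      have "card (D \<inter> Bad) \<le> card (D \<inter> E1) + card (D \<inter> E2) + (\<Sum>c\<in>I2. card (D \<inter> F c))"
      proof -
        have "card ((D \<inter> E1) \<union> (D \<inter> E2) \<union> (\<Union>c\<in>I2. D \<inter> F c))
               \<le> card ((D \<inter> E1) \<union> (D \<inter> E2)) + card (\<Union>c\<in>I2. D \<inter> F c)" by (rule card_Un_le)
        also have "\<dots> \<le> card (D \<inter> E1) + card (D \<inter> E2) + card (\<Union>c\<in>I2. D \<inter> F c)"
          using card_Un_le[of "D \<inter> E1" "D \<inter> E2"] by linarith
        finally have h: "card (D \<inter> Bad) \<le> card (D \<inter> E1) + card (D \<inter> E2) + card (\<Union>c\<in>I2. D \<inter> F c)"
          using DB by simp
        have "card (\<Union>c\<in>I2. D \<inter> F c) \<le> (\<Sum>c\<in>I2. card (D \<inter> F c))"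
          using card_UN_le[OF finI2] by blast
        then show ?thesis using h by linarith
      qed
      then have "card (D \<inter> Bad) * q \<le> (card (D \<inter> E1) + card (D \<inter> E2) + (\<Sum>c\<in>I2. card (D \<inter> F c))) * q"
        by simp
      also have "\<dots> = card (D \<inter> E1) * q + card (D \<inter> E2) * q + (\<Sum>c\<in>I2. card (D \<inter> F c) * q)"
        by (simp add: add_mult_distrib sum_distrib_right)
      also have "\<dots> \<le> card D + card D + (\<Sum>c\<in>I2. card D)"
        using cE1 cE2 cF by (intro add_mono sum_mono) auto
      finally have bq: "card (D \<inter> Bad) * q \<le> (2 + card I2) * card D" by (simp add: algebra_simps)
      have DG: "D - Bad \<subseteq> D \<inter> G"
      proof
        fix \<omega> assume wD: "\<omega> \<in> D - Bad"
        then have w: "\<omega> \<in> draws t k P" and nE1: "\<omega> \<notin> E1" and nE2: "\<omega> \<notin> E2"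
          and nF: "\<forall>c\<in>I2. \<omega> \<notin> F c" unfolding D_def Bad_def by auto
        have noF: "\<forall>x j i. 2 \<le> j \<and> j \<le> t \<and> i < k x j \<longrightarrow>
                 \<omega> x j i \<notin> span R n (P (j - 2) \<union> {\<omega> x j i' | i'. i' < i})"
        proof (intro allI impI)
          fix x j i assume a: "2 \<le> j \<and> j \<le> t \<and> i < k x j"
          then have "(x, j, i) \<in> I2" unfolding I2_def by auto
          then show "\<omega> x j i \<notin> span R n (P (j - 2) \<union> {\<omega> x j i' | i'. i' < i})"
            using nF unfolding F_def by auto
        qed
        have k0: "0 < k y 1" for y using kT kF by (cases y) auto
        have key: "\<omega> y 1 0 \<in> span R n {\<omega> x 1 i | i. i < k x 1}"
          if m1: "\<omega> y 1 0 \<in> PIv R n k \<omega> x m" and m2: "m \<in> {1..t}" for x y m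
        proof -
          have "\<omega> y 1 0 \<in> P (1 - 1)" using drawsD[OF w, of 1 0 y] t1 k0 by simp
          then have "\<omega> y 1 0 \<in> P 0" by simp
          moreover have "PIv R n k \<omega> x m = span R n (\<Union>j\<in>{1..m}. {\<omega> x j i | i. i < k x j})"
            using PIv_eq[OF w subs] m2 by auto
          ultimately show ?thesis using structural[OF w subs ch noF, of m x] m1 m2 by auto
        qed
        have mem: "\<omega> y 1 0 \<in> PIv R n k \<omega> y m" if m2: "m \<in> {1..t}" for y m
        proof -
          have "\<omega> y 1 0 \<in> {\<omega> y 1 i | i. i < k y 1}" using k0 by blast
          moreover have "1 \<in> {1..m}" using m2 by simp
          ultimately have m0: "\<omega> y 1 0 \<in> (\<Union>j\<in>{1..m}. {\<omega> y j i | i. i < k y j})" by blast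
          have e: "PIv R n k \<omega> y m = span R n (\<Union>j\<in>{1..m}. {\<omega> y j i | i. i < k y j})"
            using PIv_eq[OF w subs, of m y] m2 by simp
          show ?thesis unfolding e using m0 by (rule Defs.span.span_base)
        qed
        have "\<omega> \<in> G" unfolding G_def
        proof (intro CollectI ballI conjI)
          fix i j assume i: "i \<in> {1..t}" and j: "j \<in> {1..t}"
          show "\<not> PIv R n k \<omega> True i \<subseteq> PIv R n k \<omega> False j"
          proof
            assume "PIv R n k \<omega> True i \<subseteq> PIv R n k \<omega> False j"
            then have "\<omega> True 1 0 \<in> PIv R n k \<omega> False j" using mem[OF i, of True] by blast
            then have "\<omega> \<in> E1" using key[OF _ j] unfolding E1_def by simp
            then show False using nE1 by simp
          qed
          show "\<not> PIv R n k \<omega> False j \<subseteq> PIv R n k \<omega> True i"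
          proof
            assume "PIv R n k \<omega> False j \<subseteq> PIv R n k \<omega> True i"
            then have "\<omega> False 1 0 \<in> PIv R n k \<omega> True i" using mem[OF j, of False] by blast
            then have "\<omega> \<in> E2" using key[OF _ i] unfolding E2_def by simp
            then show False using nE2 by simp
          qed
        qed
        then show "\<omega> \<in> D \<inter> G" using wD by simp
      qed
      have "card (D - Bad) \<le> card (D \<inter> G)" using DG finD by (intro card_mono) auto
      moreover have "card (D - Bad) = card D - card (D \<inter> Bad)"
        using finD by (metis Diff_Int2 card_Diff_subset_Int finite_Int inf.idem)
      moreover have "card (D \<inter> Bad) \<le> card D" using finD by (intro card_mono) auto
      ultimately have ge: "real (card (D \<inter> G)) \<ge> real (card D) - real (card (D \<inter> Bad))" by linarith
      have "real (card (D \<inter> Bad) * q) \<le> real ((2 + card I2) * card D)"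
        using bq by (simp only: of_nat_le_iff)
      then have rb: "real (card (D \<inter> Bad)) * real q \<le> real (2 + card I2) * real (card D)"
        by (simp only: of_nat_mult)
      have "real (card (D \<inter> Bad)) / real (card D) \<le> real (2 + card I2) / real q"
        using rb q0 cD by (simp add: field_simps)
      moreover have "real (card (D \<inter> G)) / real (card D) \<ge> 1 - real (card (D \<inter> Bad)) / real (card D)"
      proof -
        have "1 - real (card (D \<inter> Bad)) / real (card D) = (real (card D) - real (card (D \<inter> Bad))) / real (card D)"
          using cD by (simp add: diff_divide_distrib)
        also have "\<dots> \<le> real (card (D \<inter> G)) / real (card D)"
          using ge cD by (intro divide_right_mono) auto
        finally show ?thesis .
      qed
      ultimately show ?thesis using prob by simp
    qed
    then show "measure_pmf.prob (pmf_of_set (draws t k P))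
             {\<omega>. \<forall>i\<in>{1..t}. \<forall>j\<in>{1..t}.
                  \<not> PIv R n k \<omega> True i \<subseteq> PIv R n k \<omega> False j \<and>
                  \<not> PIv R n k \<omega> False j \<subseteq> PIv R n k \<omega> True i}
           \<ge> 1 - real (2 + card I2) / real (card (carrier R))"
      unfolding D_def G_def q_def .
  qed
qed

end
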